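(* Let $D$ be a virtual knot diagram of a virtual knot. Then $D$ can be transformed into the trivial knot diagram by a finite sequence of (classical) Reidemeister moves, virtual Reidemeister moves, and forbidden detour moves. Moreover, if $D$ has $c$ real crossings, then this can be done using at most $\frac{(c-1)(2c^{2}+11c-3)}{24}$ forbidden detour moves if $c$ is odd, and at most $\frac{c(2c^{2}+9c-14)}{24}$ forbidden detour moves if $c$ is even.
   Context: Virtual knots are equivalence classes of virtual knot diagrams (planar diagrams with real (classical) crossings and virtual crossings) under classical Reidemeister moves and virtual Reidemeister moves; equivalently, equivalence classes of Gauss diagrams under the Gauss-diagram versions of the Reidemeister moves. The Gauss diagram of a diagram with $c$ real crossings is an oriented circle with $c$ signed arrows, one per real crossing, joining the two preimages of the crossing (oriented from the over-crossing preimage to the under-crossing preimage, signed by the local writhe of the crossing); virtual crossings are not recorded. A forbidden detour move (the $F_2'$-move of Kanenobu) is the local move on virtual knot diagrams whose effect on the Gauss diagram is the following: if the head of one arrow and the tail of a different arrow are adjacent on the circle (no other arrow endpoints between them), their positions are exchanged, with all signs kept. The trivial knot diagram is the diagram with no crossings. *)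

theory Defs
  imports Complex_Main
begin

text \<open>An endpoint is a pair (arrow label, is_tail): the tail of an
arrow is the over-crossing preimage, the head the under-crossing preimage.
A Gauss diagram is a cyclic word of endpoints (represented by a list, rotations
being a trivial step) together with a sign function on arrow labels
(True = positive local writhe).\<close>

type_synonym endpt = "nat \<times> bool"
type_synonym gd = "endpt list \<times> (nat \<Rightarrow> bool)"

definition wf_gd :: "endpt list \<Rightarrow> bool" where
  "wf_gd w \<longleftrightarrow> distinct w \<and> (\<forall>a b. (a, b) \<in> set w \<longrightarrow> (a, \<not> b) \<in> set w)"

definition labels :: "endpt list \<Rightarrow> nat set" where
  "labels w = fst ` set w"

definition sg :: "bool \<Rightarrow> int" where
  "sg b = (if b then 1 else -1)"

text \<open>Steps that do not change the Gauss diagram: rotating the cyclic word, and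
changing the sign function on labels not used by any arrow.\<close>
inductive same_gd :: "gd \<Rightarrow> gd \<Rightarrow> bool" where
  rot: "same_gd (e # w, s) (w @ [e], s)"
| resign: "(\<forall>a\<in>labels w. s a = s' a) \<Longrightarrow> same_gd (w, s) (w, s')"

definition r1 :: "gd \<Rightarrow> gd \<Rightarrow> bool" where
  "r1 G G' \<longleftrightarrow> (\<exists>u v a x s. G = (u @ [(a, x), (a, \<not> x)] @ v, s) \<and> G' = (u @ v, s))"

definition r2 :: "gd \<Rightarrow> gd \<Rightarrow> bool" where
  "r2 G G' \<longleftrightarrow> (\<exists>u v y a b t Q s.
      G = (u @ [(a, t), (b, t)] @ v @ Q @ y, s) \<and>
      (Q = [(a, \<not> t), (b, \<not> t)] \<or> Q = [(b, \<not> t), (a, \<not> t)]) \<and>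
      a \<noteq> b \<and> s a \<noteq> s b \<and> G' = (u @ v @ y, s))"

text \<open>Reidemeister III configuration: segments A, B, C (strands 1, 2, 3), arrows
p (between strands 1,2), q (2,3), r (3,1); t1: strand 1 over 2, t2: 2 over 3,
t3: 3 over 1. sigma_i: strand i meets strand i-1 before strand i+1 (mod 3).
The over/under relation must be acyclic and the signs must satisfy the
realizability condition of a triangle of three strands.\<close>
definition r3_config :: "(nat \<Rightarrow> bool) \<Rightarrow> endpt list \<Rightarrow> endpt list \<Rightarrow> endpt list \<Rightarrow> bool" where
  "r3_config s A B C \<longleftrightarrow> (\<exists>p q r t1 t2 t3.
      p \<noteq> q \<and> q \<noteq> r \<and> p \<noteq> r \<and>
      (A = [(r, \<not> t3), (p, t1)] \<or> A = [(p, t1), (r, \<not> t3)]) \<and>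
      (B = [(p, \<not> t1), (q, t2)] \<or> B = [(q, t2), (p, \<not> t1)]) \<and>
      (C = [(q, \<not> t2), (r, t3)] \<or> C = [(r, t3), (q, \<not> t2)]) \<and>
      \<not> (t1 = t2 \<and> t2 = t3) \<and>
      (let \<sigma>1 = (hd A = (r, \<not> t3)); \<sigma>2 = (hd B = (p, \<not> t1)); \<sigma>3 = (hd C = (q, \<not> t2)) in
        sg (s p) * sg t1 * sg \<sigma>1 * sg \<sigma>2 = sg (s q) * sg t2 * sg \<sigma>2 * sg \<sigma>3 \<and>
        sg (s q) * sg t2 * sg \<sigma>2 * sg \<sigma>3 = sg (s r) * sg t3 * sg \<sigma>3 * sg \<sigma>1))"

definition r3 :: "gd \<Rightarrow> gd \<Rightarrow> bool" where
  "r3 G G' \<longleftrightarrow> (\<exists>x0 x1 x2 x3 A B C s.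
      G = (x0 @ A @ x1 @ B @ x2 @ C @ x3, s) \<and>
      G' = (x0 @ rev A @ x1 @ rev B @ x2 @ rev C @ x3, s) \<and>
      r3_config s A B C)"

text \<open>Classical and virtual Reidemeister moves on Gauss diagrams (virtual moves
do not change the Gauss diagram), restricted to well-formed diagrams.\<close>
definition rmove :: "gd \<Rightarrow> gd \<Rightarrow> bool" where
  "rmove G G' \<longleftrightarrow> wf_gd (fst G) \<and> wf_gd (fst G') \<and>
     (same_gd G G' \<or> r1 G G' \<or> r1 G' G \<or> r2 G G' \<or> r2 G' G \<or> r3 G G' \<or> r3 G' G)"

definition fmove :: "gd \<Rightarrow> gd \<Rightarrow> bool" where
  "fmove G G' \<longleftrightarrow> wf_gd (fst G) \<and> wf_gd (fst G') \<and>
     (\<exists>u v p q s. G = (u @ [p, q] @ v, s) \<and> G' = (u @ [q, p] @ v, s) \<and>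
        fst p \<noteq> fst q \<and> snd p \<noteq> snd q)"

inductive reach :: "gd \<Rightarrow> gd \<Rightarrow> nat \<Rightarrow> bool" where
  refl: "reach G G 0"
| rstep: "rmove G G' \<Longrightarrow> reach G' H k \<Longrightarrow> reach G H k"
| fstep: "fmove G G' \<Longrightarrow> reach G' H k \<Longrightarrow> reach G H (Suc k)"

end

theory Submission
  imports Defs "HOL-Library.Multiset"
begin


lemma reach_trans: "reach G H k \<Longrightarrow> reach H K l \<Longrightarrow> reach G K (k + l)"
  by (induction rule: reach.induct) (auto intro: reach.intros)

lemma wf_swap: "wf_gd (u @ [p, q] @ v) \<Longrightarrow> wf_gd (u @ [q, p] @ v)"
  unfolding wf_gd_def by auto

lemma wf_mset: "mset w = mset w' \<Longrightarrow> wf_gd w \<Longrightarrow> wf_gd w'"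
  unfolding wf_gd_def using mset_eq_imp_distinct_iff mset_eq_setD by blast

lemma swap_reach:
  assumes "wf_gd (u @ [p, q] @ v)" "fst p \<noteq> fst q" "snd p \<noteq> snd q"
    "reach (u @ [q, p] @ v, s) H k"
  shows "reach (u @ [p, q] @ v, s) H (Suc k)"
proof (rule reach.fstep[OF _ assms(4)])
  show "fmove (u @ [p, q] @ v, s) (u @ [q, p] @ v, s)"
    unfolding fmove_def fst_conv using assms(1-3) wf_swap[OF assms(1)]
    by (intro conjI exI[of _ u] exI[of _ v] exI[of _ p] exI[of _ q] exI[of _ s]) simp_all
qed

fun invc :: "bool \<Rightarrow> endpt list \<Rightarrow> nat" where
  "invc b [] = 0"
| "invc b (e # S) = (if snd e = b then length (filter (\<lambda>f. snd f \<noteq> b) S) else 0) + invc b S"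

lemma inv_append: "invc b (A @ B) = invc b A + invc b B +
   length (filter (\<lambda>f. snd f = b) A) * length (filter (\<lambda>f. snd f \<noteq> b) B)"
  by (induction A) auto

lemma inv_le: "invc b S \<le> length (filter (\<lambda>f. snd f = b) S) * length (filter (\<lambda>f. snd f \<noteq> b) S)"
proof (induction S)
  case (Cons e S)
  then show ?case by (cases "snd e = b") (auto simp: algebra_simps)
qed auto

lemma invc_bound: "invc b S \<le> length S * length S div 4"
proof -
  let ?h = "length (filter (\<lambda>f. snd f = b) S)" and ?t = "length (filter (\<lambda>f. snd f \<noteq> b) S)"
  have ht: "?h + ?t = length S" by (rule sum_length_filter_compl)
  have "4 * (?h * ?t) \<le> (?h + ?t) * (?h + ?t)"
  proof -
    have "(int ?h - int ?t)^2 \<ge> 0" by simp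
    then have "4 * (int ?h * int ?t) \<le> (int ?h + int ?t) * (int ?h + int ?t)"
      by (simp add: power2_eq_square algebra_simps)
    then have "int (4 * (?h * ?t)) \<le> int ((?h + ?t) * (?h + ?t))" by simp
    then show ?thesis by (simp only: of_nat_le_iff)
  qed
  then have "?h * ?t \<le> length S * length S div 4" using ht by simp
  then show ?thesis using inv_le[of b S] by linarith
qed

lemma adj_pair:
  "S \<noteq> [] \<Longrightarrow> snd (hd S) = b \<Longrightarrow> snd (last S) \<noteq> b \<Longrightarrow>
   \<exists>A p q B. S = A @ [p, q] @ B \<and> snd p = b \<and> snd q \<noteq> b"
proof (induction S)
  case (Cons e S)
  note ih = Cons.IH and pr = Cons.prems
  show ?case
  proof (cases S)
    case Nil then show ?thesis using pr by simp
  next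
    case (Cons f S')
    show ?thesis
    proof (cases "snd f = b")
      case True
      then have "\<exists>A p q B. S = A @ [p, q] @ B \<and> snd p = b \<and> snd q \<noteq> b"
        using ih pr \<open>S = f # S'\<close> by simp
      then obtain A p q B where "S = A @ [p, q] @ B" "snd p = b" "snd q \<noteq> b" by blast
      then show ?thesis
        by (intro exI[of _ "e # A"] exI[of _ p] exI[of _ q] exI[of _ B]) simp
    next
      case False
      then show ?thesis using pr \<open>S = f # S'\<close>
        by (intro exI[of _ "[]"] exI[of _ e] exI[of _ f] exI[of _ S']) simp
    qed
  qed
qed simp


lemma sweep:
  assumes "wf_gd (u @ [x] @ S @ [y] @ v)" "fst x \<notin> fst ` set S" "fst y \<notin> fst ` set S"
    "snd y = (\<not> snd x)" "distinct (map fst S)"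
  shows "\<exists>S1 S2 k. reach (u @ [x] @ S @ [y] @ v, s) (u @ S1 @ [x, y] @ S2 @ v, s) k \<and>
           k \<le> length S + invc (snd x) S \<and> mset (S1 @ S2) = mset S"
  using assms
proof (induction "length S + invc (snd x) S" arbitrary: u v S rule: less_induct)
  case less
  let ?b = "snd x"
  show ?case
  proof (cases S)
    case Nil
    then show ?thesis
      by (intro exI[of _ "[]"] exI[of _ "[]"] exI[of _ 0]) (simp add: reach.refl)
  next
    case (Cons e S')
    consider (c1) "snd e \<noteq> ?b" | (c2) "snd e = ?b" "snd (last S) = ?b"
      | (c3) "snd e = ?b" "snd (last S) \<noteq> ?b" by blast
    then show ?thesis
    proof cases
      case c1
      have w: "u @ [x] @ S @ [y] @ v = u @ [x, e] @ (S' @ [y] @ v)" using Cons by simp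
      have wf: "wf_gd ((u @ [e]) @ [x] @ S' @ [y] @ v)"
        using wf_swap[of u x e "S' @ [y] @ v"] less.prems(1) w by simp
      have lt: "length S' + invc ?b S' < length S + invc ?b S" using Cons c1 by simp
      obtain S1 S2 k where r: "reach ((u @ [e]) @ [x] @ S' @ [y] @ v, s) ((u @ [e]) @ S1 @ [x, y] @ S2 @ v, s) k"
        "k \<le> length S' + invc ?b S'" "mset (S1 @ S2) = mset S'"
        using less.hyps[OF lt wf] less.prems Cons by auto
      have "reach (u @ [x] @ S @ [y] @ v, s) (u @ (e # S1) @ [x, y] @ S2 @ v, s) (Suc k)"
        unfolding w
      proof (rule swap_reach)
        show "wf_gd (u @ [x, e] @ S' @ [y] @ v)" using less.prems(1) w by simp
        show "fst x \<noteq> fst e" using less.prems(2) Cons by auto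
        show "snd x \<noteq> snd e" using c1 by simp
        show "reach (u @ [e, x] @ S' @ [y] @ v, s) (u @ (e # S1) @ [x, y] @ S2 @ v, s) k"
          using r(1) by simp
      qed
      then show ?thesis using r Cons c1
        by (intro exI[of _ "e # S1"] exI[of _ S2] exI[of _ "Suc k"]) simp
    next
      case c2
      define S'' where "S'' = butlast S"
      define e' where "e' = last S"
      have S: "S = S'' @ [e']" using Cons unfolding S''_def e'_def by simp
      have w: "u @ [x] @ S @ [y] @ v = (u @ [x] @ S'') @ [e', y] @ v" using S by simp
      have wf: "wf_gd (u @ [x] @ S'' @ [y] @ (e' # v))"
        using wf_swap[of "u @ [x] @ S''" e' y v] less.prems(1) w by simp
      have e'b: "snd e' = ?b" using c2 e'_def by simp
      have lt: "length S'' + invc ?b S'' < length S + invc ?b S" unfolding S using e'b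
        by (simp add: inv_append)
      obtain S1 S2 k where r: "reach (u @ [x] @ S'' @ [y] @ (e' # v), s) (u @ S1 @ [x, y] @ S2 @ (e' # v), s) k"
        "k \<le> length S'' + invc ?b S''" "mset (S1 @ S2) = mset S''"
        using less.hyps[OF lt wf] less.prems S by auto
      have "reach (u @ [x] @ S @ [y] @ v, s) (u @ S1 @ [x, y] @ (S2 @ [e']) @ v, s) (Suc k)"
        unfolding w
      proof (rule swap_reach)
        show "wf_gd ((u @ [x] @ S'') @ [e', y] @ v)" using less.prems(1) w by simp
        show "fst e' \<noteq> fst y" using less.prems(3) S by auto
        show "snd e' \<noteq> snd y" using e'b less.prems(4) by simp
        show "reach ((u @ [x] @ S'') @ [y, e'] @ v, s) (u @ S1 @ [x, y] @ (S2 @ [e']) @ v, s) k"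
          using r(1) by simp
      qed
      then show ?thesis using r e'b unfolding S
        by (intro exI[of _ S1] exI[of _ "S2 @ [e']"] exI[of _ "Suc k"]) (simp add: inv_append)
    next
      case c3
      obtain A p q B where S: "S = A @ [p, q] @ B" "snd p = ?b" "snd q \<noteq> ?b"
      proof -
        have "S \<noteq> []" "snd (hd S) = ?b" using Cons c3 by auto
        from adj_pair[OF this c3(2)] show ?thesis using that by blast
      qed
      have w: "u @ [x] @ S @ [y] @ v = (u @ [x] @ A) @ [p, q] @ (B @ [y] @ v)" using S by simp
      have w2: "(u @ [x] @ A) @ [q, p] @ (B @ [y] @ v) = u @ [x] @ (A @ [q, p] @ B) @ [y] @ v" by simp
      have wf: "wf_gd (u @ [x] @ (A @ [q, p] @ B) @ [y] @ v)"
        using wf_swap[of "u @ [x] @ A" p q "B @ [y] @ v"] less.prems(1) w by simp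
      have lt: "length (A @ [q, p] @ B) + invc ?b (A @ [q, p] @ B) < length S + invc ?b S" using S
        by (simp add: inv_append)
      have pq: "fst p \<noteq> fst q" using less.prems(5) S by auto
      obtain S1 S2 k where r: "reach (u @ [x] @ (A @ [q, p] @ B) @ [y] @ v, s) (u @ S1 @ [x, y] @ S2 @ v, s) k"
        "k \<le> length (A @ [q, p] @ B) + invc ?b (A @ [q, p] @ B)" "mset (S1 @ S2) = mset (A @ [q, p] @ B)"
        using less.hyps[OF lt wf] less.prems S by auto
      have "reach (u @ [x] @ S @ [y] @ v, s) (u @ S1 @ [x, y] @ S2 @ v, s) (Suc k)"
        unfolding w
      proof (rule swap_reach)
        show "wf_gd ((u @ [x] @ A) @ [p, q] @ B @ [y] @ v)" using less.prems(1) w by simp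
        show "fst p \<noteq> fst q" by (rule pq)
        show "snd p \<noteq> snd q" using S by simp
        show "reach ((u @ [x] @ A) @ [q, p] @ B @ [y] @ v, s) (u @ S1 @ [x, y] @ S2 @ v, s) k"
          using r(1) w2 by simp
      qed
      moreover have "Suc k \<le> length S + invc ?b S" using r(2) lt S by simp
      ultimately show ?thesis using r S
        by (intro exI[of _ S1] exI[of _ S2] exI[of _ "Suc k"]) simp
    qed
  qed
qed



lemma dup_decomp:
  assumes "\<not> distinct (map fst S)"
  shows "\<exists>P p Q q R. S = P @ [p] @ Q @ [q] @ R \<and> fst p = fst q"
proof -
  obtain xs ys zs a where m: "map fst S = xs @ [a] @ ys @ [a] @ zs"
    using not_distinct_decomp[OF assms] by blast
  then obtain P V where "S = P @ V" "map fst V = [a] @ ys @ [a] @ zs"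
    by (auto simp: map_eq_append_conv)
  then obtain p V' where "S = P @ [p] @ V'" "fst p = a" "map fst V' = ys @ [a] @ zs"
    by (auto simp: Cons_eq_map_conv)
  then obtain Q W where "S = P @ [p] @ Q @ W" "fst p = a" "map fst W = [a] @ zs"
    by (auto simp: map_eq_append_conv)
  then obtain q R where "S = P @ [p] @ Q @ [q] @ R" "fst p = fst q"
    by (auto simp: Cons_eq_map_conv)
  then show ?thesis by blast
qed

lemma arc_min:
  "w = u @ [x] @ S @ [y] @ v \<Longrightarrow> fst x = fst y \<Longrightarrow>
   \<exists>u x S y v. w = u @ [x] @ S @ [y] @ v \<and> fst x = fst y \<and> distinct (map fst S) \<and> fst x \<notin> fst ` set S"
proof (induction "length S" arbitrary: u x S y v rule: less_induct)
  case less
  show ?case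
  proof (cases "fst x \<in> fst ` set S")
    case True
    then obtain z where z: "z \<in> set S" "fst z = fst x" by auto
    then obtain S1 S2 where S: "S = S1 @ z # S2" by (meson split_list)
    have "w = u @ [x] @ S1 @ [z] @ (S2 @ [y] @ v)" using less.prems S by simp
    moreover have "length S1 < length S" using S by simp
    ultimately show ?thesis using less.hyps z(2) by metis
  next
    case False
    show ?thesis
    proof (cases "distinct (map fst S)")
      case True
      then show ?thesis using False less.prems by blast
    next
      case nd: False
      obtain P p Q q R where S: "S = P @ [p] @ Q @ [q] @ R" "fst p = fst q"
        using dup_decomp[OF nd] by blast
      have "w = (u @ [x] @ P) @ [p] @ Q @ [q] @ (R @ [y] @ v)" using less.prems S by simp
      moreover have "length Q < length S" using S by simp
      ultimately show ?thesis using less.hyps S(2) by metis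
    qed
  qed
qed

lemma two_decomp:
  assumes "x \<in> set w" "y \<in> set w" "x \<noteq> y"
  shows "\<exists>u S v. w = u @ [x] @ S @ [y] @ v \<or> w = u @ [y] @ S @ [x] @ v"
proof -
  obtain u1 v1 where w: "w = u1 @ x # v1" using assms(1) by (meson split_list)
  have "y \<in> set u1 \<or> y \<in> set v1" using w assms by auto
  then show ?thesis
  proof
    assume "y \<in> set u1"
    then obtain a b where "u1 = a @ y # b" by (meson split_list)
    then show ?thesis using w by auto
  next
    assume "y \<in> set v1"
    then obtain a b where "v1 = a @ y # b" by (meson split_list)
    then show ?thesis using w by auto
  qed
qed

fun F :: "nat \<Rightarrow> nat" where
  "F 0 = 0"
| "F (Suc n) = F n + n + n * n div 4"



lemma main:
  "wf_gd w \<Longrightarrow> \<exists>k. reach (w, s) ([], s) k \<and> k \<le> F (card (labels w))"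
proof (induction "length w" arbitrary: w rule: less_induct)
  case less
  show ?case
  proof (cases "w = []")
    case True
    then show ?thesis by (intro exI[of _ 0]) (simp add: reach.refl)
  next
    case False
    then obtain a b where ab: "(a, b) \<in> set w" by (metis list.set_intros(1) neq_Nil_conv surj_pair)
    then have ab2: "(a, \<not> b) \<in> set w" using less.prems unfolding wf_gd_def by blast
    obtain u0 S0 v0 x0 y0 where "w = u0 @ [x0] @ S0 @ [y0] @ v0" "fst x0 = fst y0"
      using two_decomp[OF ab ab2] by fastforce
    then obtain u x S y v where d: "w = u @ [x] @ S @ [y] @ v" "fst x = fst y"
      "distinct (map fst S)" "fst x \<notin> fst ` set S"
      using arc_min by metis
    have dw: "distinct w" using less.prems unfolding wf_gd_def by blast
    have xy: "x \<noteq> y" using dw d(1) by auto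
    have sy: "snd y = (\<not> snd x)" using xy d(2) by (cases x; cases y) auto
    have yx: "y = (fst x, \<not> snd x)" using sy d(2) by (cases y) auto
    have labx: "\<And>z. z \<in> set w \<Longrightarrow> fst z = fst x \<Longrightarrow> z = x \<or> z = y"
      using yx by (case_tac z; case_tac x) auto
    obtain S1 S2 k1 where sw: "reach (w, s) (u @ S1 @ [x, y] @ S2 @ v, s) k1"
      "k1 \<le> length S + invc (snd x) S" "mset (S1 @ S2) = mset S"
      using sweep[of u x S y v s] less.prems d sy by auto
    define w1 where "w1 = u @ S1 @ [x, y] @ S2 @ v"
    define w2 where "w2 = u @ S1 @ S2 @ v"
    have m1: "mset w1 = mset w" using sw(3) d(1) unfolding w1_def
      by (simp add: algebra_simps)
    have wf1: "wf_gd w1" using wf_mset[OF m1[symmetric] less.prems] .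
    have dw1: "distinct w1" using wf1 unfolding wf_gd_def by blast
    have sw1: "set w1 = set w" using m1 by (metis set_mset_mset)
    have sw2: "set w2 \<subseteq> set w" using sw1 unfolding w1_def w2_def by auto
    have xw2: "x \<notin> set w2" "y \<notin> set w2" using dw1 unfolding w1_def w2_def by auto
    have lab2: "\<And>z. z \<in> set w2 \<Longrightarrow> fst z \<noteq> fst x" using labx sw2 xw2 by blast
    have sw12: "set w = set w2 \<union> {x, y}" using sw1 unfolding w1_def w2_def by auto
    have wf2: "wf_gd w2"
      unfolding wf_gd_def
    proof (intro conjI allI impI)
      show "distinct w2" using dw1 unfolding w1_def w2_def by auto
    next
      fix c z assume cz: "(c, z) \<in> set w2"
      then have "(c, \<not> z) \<in> set w" using sw2 less.prems unfolding wf_gd_def by blast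
      moreover have "c \<noteq> fst x" using lab2[OF cz] by simp
      ultimately show "(c, \<not> z) \<in> set w2" using sw12 yx by auto
    qed
    have r1: "rmove (w1, s) (w2, s)"
      unfolding rmove_def r1_def fst_conv
      using wf1 wf2 yx unfolding w1_def w2_def
      by (intro conjI disjI2 disjI1 exI[of _ "u @ S1"] exI[of _ "S2 @ v"] exI[of _ "fst x"]
          exI[of _ "snd x"] exI[of _ s]) auto
    have labs2: "labels w2 = labels w - {fst x}"
      unfolding labels_def using sw12 lab2 yx by auto
    have fin: "finite (labels w)" unfolding labels_def by simp
    have xl: "fst x \<in> labels w" unfolding labels_def d(1) by simp
    have cardc: "card (labels w2) = card (labels w) - 1" using labs2 fin xl by simp
    have "length (S1 @ S2) = length S" by (metis sw(3) size_mset)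
    then have lw: "length w2 < length w" using d(1) unfolding w2_def by simp
    obtain k2 where k2: "reach (w2, s) ([], s) k2" "k2 \<le> F (card (labels w2))"
      using less.hyps[OF lw wf2] by blast
    have "reach (w, s) ([], s) (k1 + k2)"
      using reach_trans[OF sw(1)[folded w1_def] reach.rstep[OF r1 k2(1)]] .
    moreover have "k1 + k2 \<le> F (card (labels w))"
    proof -
      have "length S = card (fst ` set S)" using d(3) by (metis distinct_card length_map set_map)
      also have "\<dots> \<le> card (labels w - {fst x})"
      proof (rule card_mono)
        show "finite (labels w - {fst x})" using fin by simp
        have "fst ` set S \<subseteq> labels w" unfolding labels_def d(1) by auto
        then show "fst ` set S \<subseteq> labels w - {fst x}" using d(4) by blast
      qed
      finally have ls: "length S \<le> card (labels w) - 1" using fin xl by simp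
      define c' where "c' = card (labels w) - 1"
      have "card (labels w) > 0" using fin xl card_gt_0_iff by blast
      then have cpos: "card (labels w) = Suc c'" unfolding c'_def by simp
      have ls': "length S \<le> c'" using ls unfolding c'_def .
      have "k1 \<le> length S + length S * length S div 4" using sw(2) invc_bound[of "snd x" S] by linarith
      also have "\<dots> \<le> c' + c' * c' div 4"
        using ls' by (intro add_mono div_le_mono mult_mono) auto
      finally have "k1 \<le> c' + c' * c' div 4" .
      moreover have "k2 \<le> F c'" using k2(2) cardc unfolding c'_def by simp
      ultimately show ?thesis unfolding cpos by simp
    qed
    ultimately show ?thesis by blast
  qed
qed



lemma div1: "(2 * n) * (2 * n) div 4 = n * (n::nat)"
  by simp

lemma div2: "(2 * n + 1) * (2 * n + 1) div 4 = n * n + (n::nat)"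
proof -
  have "(2 * n + 1) * (2 * n + 1) = 4 * (n * n + n) + 1" by (simp add: algebra_simps)
  then show ?thesis by simp
qed

lemma Fclosed:
  "24 * real (F (2 * n)) = 16 * real n ^ 3 + 36 * real n ^ 2 - 28 * real n \<and>
   24 * real (F (2 * n + 1)) = 16 * real n ^ 3 + 60 * real n ^ 2 + 20 * real n"
proof (induction n)
  case 0
  then show ?case by simp
next
  case (Suc n)
  have e1: "F (2 * Suc n) = F (2 * n + 1) + (2 * n + 1) + (n * n + n)"
    using div2[of n] by (simp add: mult_2)
  have e2: "F (2 * Suc n + 1) = F (2 * Suc n) + 2 * Suc n + Suc n * Suc n"
    using div1[of "Suc n"] by (simp only: Suc_eq_plus1[symmetric] F.simps)
  have a: "24 * real (F (2 * Suc n)) = 16 * real (Suc n) ^ 3 + 36 * real (Suc n) ^ 2 - 28 * real (Suc n)"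
    using Suc e1 by (simp add: algebra_simps power3_eq_cube power2_eq_square)
  moreover have "24 * real (F (2 * Suc n + 1)) = 16 * real (Suc n) ^ 3 + 60 * real (Suc n) ^ 2 + 20 * real (Suc n)"
    using a e2 by (simp add: algebra_simps power3_eq_cube power2_eq_square)
  ultimately show ?case by blast
qed

theorem theorem1p1:
  fixes w :: "endpt list" and s :: "nat \<Rightarrow> bool" and c :: nat
  assumes "wf_gd w"
    and "card (labels w) = c"
  shows "\<exists>k s'. reach (w, s) ([], s') k \<and>
           (if odd c then real k \<le> (real c - 1) * (2 * real c ^ 2 + 11 * real c - 3) / 24
            else real k \<le> real c * (2 * real c ^ 2 + 9 * real c - 14) / 24)"
proof -
  obtain k where k: "reach (w, s) ([], s) k" "k \<le> F c" using main[OF assms(1), of s] assms(2) by blast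
  have rk: "real k \<le> real (F c)" using k(2) by simp
  have "(if odd c then real k \<le> (real c - 1) * (2 * real c ^ 2 + 11 * real c - 3) / 24
            else real k \<le> real c * (2 * real c ^ 2 + 9 * real c - 14) / 24)"
  proof (cases "odd c")
    case True
    then obtain n where c: "c = 2 * n + 1" by (metis oddE)
    have "24 * real (F c) = (real c - 1) * (2 * real c ^ 2 + 11 * real c - 3)"
      using Fclosed[of n] unfolding c by (simp add: algebra_simps power3_eq_cube power2_eq_square)
    then show ?thesis using True rk by simp
  next
    case False
    then obtain n where c: "c = 2 * n" by (metis evenE)
    have "24 * real (F c) = real c * (2 * real c ^ 2 + 9 * real c - 14)"
      using Fclosed[of n] unfolding c by (simp add: algebra_simps power3_eq_cube power2_eq_square)
    then show ?thesis using False rk by simp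
  qed
  then show ?thesis using k(1) by blast
qed

end
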